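(* Let $T_1\subseteq T_2\subseteq\cdots$ be well ordered sets, each $T_n$ carrying the restriction of the order of $T_{n+1}$, all having the same minimum and the same maximum. Let $T=\bigcup_n T_n$ with the induced linear order and let $\bar T$ be its completion. Define $d:\bar T\times\bar T\to[0,+\infty)$ by $d(x,x)=0$, $d(x,y)=d(y,x)=\dfrac{1}{\min\{n: \,]x,y]\cap T_n\neq\emptyset\}}$ for $x<y$. Then $d$ is a well-defined metric on $\bar T$; it is a Reznichenko metric, i.e. for any distinct $x,y\in\bar T$ there are neighborhoods $U\ni x$, $V\ni y$ with $\inf\{d(u,v):u\in U,v\in V\}>0$; and $d$ fragments $\bar T$ (with the order topology).
   Context: The completion of a linearly ordered set $T$ is the unique linearly ordered set $\bar T\supseteq T$ (extending the order of $T$) such that $\bar T$ is compact in its order topology and $]x,y]\cap T\neq\emptyset$ for all $x<y$ in $\bar T$, where $]x,y]=\{z:x<z\le y\}$. A map $d$ fragments a topological space $K$ if for every nonempty closed $L\subseteq K$ and every $\varepsilon>0$ there is a nonempty relatively open $U\subseteq L$ with $\sup\{d(x,y):x,y\in U\}<\varepsilon$. *)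

theory Defs
  imports "HOL-Analysis.Analysis"
begin

definition well_ordered_set :: "'a::linorder set \<Rightarrow> bool" where
  "well_ordered_set S \<longleftrightarrow> (\<forall>A. A \<subseteq> S \<longrightarrow> A \<noteq> {} \<longrightarrow> (\<exists>a\<in>A. \<forall>b\<in>A. a \<le> b))"

text \<open>The ambient type (a linear order carrying its order topology) is the completion of T:
  it is compact and every half-open interval ]x,y] with x<y meets T.\<close>
definition is_completion_of :: "'a::linorder_topology set \<Rightarrow> bool" where
  "is_completion_of T \<longleftrightarrow> compact (UNIV :: 'a set) \<and> (\<forall>x y. x < y \<longrightarrow> {x<..y} \<inter> T \<noteq> {})"

text \<open>The metric d; index n :: nat stands for the paper's T_(n+1).\<close>
definition chain_metric :: "(nat \<Rightarrow> 'a::linorder set) \<Rightarrow> 'a \<Rightarrow> 'a \<Rightarrow> real" where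
  "chain_metric T x y = (if x = y then 0
     else 1 / real (Suc (LEAST n. {min x y<..max x y} \<inter> T n \<noteq> {})))"

definition fragments :: "('a::topological_space \<Rightarrow> 'a \<Rightarrow> real) \<Rightarrow> 'a set \<Rightarrow> bool" where
  "fragments d K \<longleftrightarrow> (\<forall>L. closedin (top_of_set K) L \<longrightarrow> L \<noteq> {} \<longrightarrow>
     (\<forall>\<epsilon>>0. \<exists>U. openin (top_of_set L) U \<and> U \<noteq> {} \<and>
        Sup {d x y | x y. x \<in> U \<and> y \<in> U} < \<epsilon>))"

end

theory Submission
  imports Defs
begin

lemma cm_lower:
  assumes "x \<noteq> y" "{min x y<..max x y} \<inter> T n \<noteq> {}"
  shows "1 / real (Suc n) \<le> chain_metric T x y"
proof -
  have L: "(LEAST n. {min x y<..max x y} \<inter> T n \<noteq> {}) \<le> n" by (rule Least_le) (rule assms(2))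
  show ?thesis using assms(1) L by (simp add: chain_metric_def frac_le)
qed

lemma cm_upper:
  assumes "x \<noteq> y" "\<exists>k. {min x y<..max x y} \<inter> T k \<noteq> {}"
    "\<forall>k<n. {min x y<..max x y} \<inter> T k = {}"
  shows "chain_metric T x y \<le> 1 / real (Suc n)"
proof -
  let ?L = "(LEAST n. {min x y<..max x y} \<inter> T n \<noteq> {})"
  have "{min x y<..max x y} \<inter> T ?L \<noteq> {}" using assms(2) by (rule LeastI_ex)
  hence "n \<le> ?L" using assms(3) by (meson not_le)
  thus ?thesis using assms(1) by (simp add: chain_metric_def frac_le)
qed

lemma cm_sym: "chain_metric T x y = chain_metric T y x"
  by (auto simp: chain_metric_def min.commute max.commute)

lemma cm_tri:
  assumes ex: "\<forall>x y. x < y \<longrightarrow> (\<exists>n. {x<..y} \<inter> T n \<noteq> {})"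
  shows "chain_metric T x z \<le> chain_metric T x y + chain_metric T y z"
proof (cases "x = z \<or> x = y \<or> y = z")
  case True
  then show ?thesis by (auto simp: chain_metric_def)
next
  case False
  let ?N = "(LEAST n. {min x z<..max x z} \<inter> T n \<noteq> {})"
  have "min x z < max x z" using False by (auto simp: min_def max_def)
  hence "\<exists>n. {min x z<..max x z} \<inter> T n \<noteq> {}" using ex by blast
  hence "{min x z<..max x z} \<inter> T ?N \<noteq> {}" by (rule LeastI_ex)
  then obtain w where w: "w \<in> {min x z<..max x z}" "w \<in> T ?N" by blast
  have dxz: "chain_metric T x z = 1 / real (Suc ?N)" using False by (simp add: chain_metric_def)
  have "w \<in> {min x y<..max x y} \<or> w \<in> {min y z<..max y z}"
    using w(1) by (auto simp: min_def max_def split: if_splits)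
  thus ?thesis
  proof
    assume "w \<in> {min x y<..max x y}"
    hence "1 / real (Suc ?N) \<le> chain_metric T x y" using w(2) False by (intro cm_lower) auto
    moreover have "chain_metric T y z \<ge> 0" by (simp add: chain_metric_def)
    ultimately show ?thesis using dxz by linarith
  next
    assume "w \<in> {min y z<..max y z}"
    hence "1 / real (Suc ?N) \<le> chain_metric T y z" using w(2) False by (intro cm_lower) auto
    moreover have "chain_metric T x y \<ge> 0" by (simp add: chain_metric_def)
    ultimately show ?thesis using dxz by linarith
  qed
qed

lemma rez_lt:
  fixes T :: "nat \<Rightarrow> 'a::linorder_topology set"
  assumes compl: "is_completion_of (\<Union>n. T n)" and xy: "x < y"
  shows "\<exists>U V. open U \<and> x \<in> U \<and> open V \<and> y \<in> V \<and>
     (\<exists>e>0. \<forall>u\<in>U. \<forall>v\<in>V. e \<le> chain_metric T u v)"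
proof (cases "\<exists>t n. x < t \<and> t < y \<and> t \<in> T n")
  case True
  then obtain t n where t: "x < t" "t < y" "t \<in> T n" by blast
  have "\<forall>u\<in>{..<t}. \<forall>v\<in>{t<..}. 1 / real (Suc n) \<le> chain_metric T u v"
  proof (intro ballI)
    fix u v assume uv: "u \<in> {..<t}" "v \<in> {t<..}"
    hence "u < v" "t \<in> {min u v<..max u v}" by auto
    hence "u \<noteq> v" "{min u v<..max u v} \<inter> T n \<noteq> {}" using t(3) by auto
    thus "1 / real (Suc n) \<le> chain_metric T u v" by (rule cm_lower)
  qed
  moreover have "(0::real) < 1 / real (Suc n)" by simp
  ultimately have E: "\<exists>e>0. \<forall>u\<in>{..<t}. \<forall>v\<in>{t<..}. e \<le> chain_metric T u v" by blast
  have "x \<in> {..<t}" "y \<in> {t<..}" using t by auto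
  thus ?thesis using E open_lessThan open_greaterThan by blast
next
  case False
  have c: "\<And>a b. a < b \<Longrightarrow> {a<..b} \<inter> (\<Union>n. T n) \<noteq> {}" using compl unfolding is_completion_of_def by blast
  obtain t where t: "t \<in> {x<..y}" "t \<in> (\<Union>n. T n)" using c[OF xy] by blast
  then obtain n where tn: "t \<in> T n" by blast
  have "\<not> t < y" using False t(1) tn by auto
  hence "t = y" using t(1) by auto
  hence yn: "y \<in> T n" using tn by simp
  have nos: "\<not> (x < s \<and> s < y)" for s
  proof
    assume s: "x < s \<and> s < y"
    then obtain w where w: "w \<in> {x<..s}" "w \<in> (\<Union>n. T n)" using c[of x s] by blast
    then obtain k where "w \<in> T k" by blast
    moreover have "x < w" "w < y" using w(1) s by auto
    ultimately show False using False by blast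
  qed
  have "\<forall>u\<in>{..<y}. \<forall>v\<in>{x<..}. 1 / real (Suc n) \<le> chain_metric T u v"
  proof (intro ballI)
    fix u v assume uv: "u \<in> {..<y}" "v \<in> {x<..}"
    have "u \<le> x" using nos[of u] uv by auto
    moreover have "y \<le> v"
    proof (rule leI)
      show "\<not> v < y" using nos[of v] uv(2) by simp
    qed
    ultimately have "u < v" "y \<in> {min u v<..max u v}" using xy by auto
    hence "u \<noteq> v" "{min u v<..max u v} \<inter> T n \<noteq> {}" using yn by auto
    thus "1 / real (Suc n) \<le> chain_metric T u v" by (rule cm_lower)
  qed
  moreover have "(0::real) < 1 / real (Suc n)" by simp
  ultimately have E: "\<exists>e>0. \<forall>u\<in>{..<y}. \<forall>v\<in>{x<..}. e \<le> chain_metric T u v" by blast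
  have "x \<in> {..<y}" "y \<in> {x<..}" using xy by auto
  thus ?thesis using E open_lessThan open_greaterThan by blast
qed

lemma rez:
  fixes T :: "nat \<Rightarrow> 'a::linorder_topology set"
  assumes compl: "is_completion_of (\<Union>n. T n)" and xy: "x \<noteq> y"
  shows "\<exists>U V. open U \<and> x \<in> U \<and> open V \<and> y \<in> V \<and>
          Inf {chain_metric T u v | u v. u \<in> U \<and> v \<in> V} > 0"
proof -
  have "\<exists>U V. open U \<and> x \<in> U \<and> open V \<and> y \<in> V \<and>
     (\<exists>e>0. \<forall>u\<in>U. \<forall>v\<in>V. e \<le> chain_metric T u v)"
  proof (cases "x < y")
    case True show ?thesis by (rule rez_lt[OF compl True])
  next
    case False
    hence yx: "y < x" using xy by auto
    obtain U V e where H: "open U" "y \<in> U" "open V" "x \<in> V" "e > 0"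
      "\<forall>u\<in>U. \<forall>v\<in>V. e \<le> chain_metric T u v" using rez_lt[OF compl yx] by blast
    have H2: "\<forall>u\<in>V. \<forall>v\<in>U. e \<le> chain_metric T u v"
    proof (intro ballI)
      fix u v assume "u \<in> V" "v \<in> U"
      hence "e \<le> chain_metric T v u" using H(6) by blast
      thus "e \<le> chain_metric T u v" by (simp only: cm_sym[of T v u])
    qed
    show ?thesis using H(1-5) H2 by blast
  qed
  then obtain U V e where UV: "open U" "x \<in> U" "open V" "y \<in> V" "e > 0"
      "\<forall>u\<in>U. \<forall>v\<in>V. e \<le> chain_metric T u v" by blast
  have ne: "{chain_metric T u v | u v. u \<in> U \<and> v \<in> V} \<noteq> {}" using UV by blast
  have "e \<le> Inf {chain_metric T u v | u v. u \<in> U \<and> v \<in> V}"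
    using ne UV(6) by (intro cInf_greatest) blast+
  hence "0 < Inf {chain_metric T u v | u v. u \<in> U \<and> v \<in> V}" using UV(5) by linarith
  thus ?thesis using UV(1-4) by blast
qed

lemma sup_small:
  fixes T :: "nat \<Rightarrow> 'a::linorder set"
  assumes mono: "\<And>n. T n \<subseteq> T (Suc n)"
    and ex: "\<forall>x y. x < y \<longrightarrow> (\<exists>n. {x<..y} \<inter> T n \<noteq> {})"
    and ne: "U \<noteq> {}"
    and none: "\<forall>u\<in>U. \<forall>v\<in>U. \<forall>w. min u v < w \<and> w \<le> max u v \<longrightarrow> w \<notin> T n"
  shows "Sup {chain_metric T x y | x y. x \<in> U \<and> y \<in> U} \<le> 1 / real (Suc n)"
proof (rule cSup_least)
  show "{chain_metric T x y | x y. x \<in> U \<and> y \<in> U} \<noteq> {}" using ne by blast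
next
  fix d assume "d \<in> {chain_metric T x y | x y. x \<in> U \<and> y \<in> U}"
  then obtain u v where uv: "u \<in> U" "v \<in> U" "d = chain_metric T u v" by blast
  show "d \<le> 1 / real (Suc n)"
  proof (cases "u = v")
    case True thus ?thesis using uv by (simp add: chain_metric_def)
  next
    case False
    have "min u v < max u v" using False by (auto simp: min_def max_def)
    hence e: "\<exists>k. {min u v<..max u v} \<inter> T k \<noteq> {}" using ex by blast
    have "\<forall>k<n. {min u v<..max u v} \<inter> T k = {}"
    proof (intro allI impI)
      fix k assume "k < n"
      hence "T k \<subseteq> T n" using lift_Suc_mono_le[of T k n] mono by auto
      thus "{min u v<..max u v} \<inter> T k = {}" using none uv by fastforce
    qed
    hence "chain_metric T u v \<le> 1 / real (Suc n)" using cm_upper[OF False e] by blast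
    thus ?thesis using uv by simp
  qed
qed

lemma frag:
  fixes T :: "nat \<Rightarrow> 'a::linorder_topology set"
  assumes mono: "\<And>n. T n \<subseteq> T (Suc n)"
    and wo: "\<And>n. well_ordered_set (T n)"
    and ex: "\<forall>x y. x < y \<longrightarrow> (\<exists>n. {x<..y} \<inter> T n \<noteq> {})"
    and cpt: "compact (UNIV :: 'a set)"
  shows "fragments (chain_metric T) (UNIV :: 'a set)"
  unfolding fragments_def
proof (intro allI impI)
  fix L :: "'a set" and \<epsilon> :: real
  assume L: "closedin (top_of_set UNIV) L" "L \<noteq> {}" and ep: "0 < \<epsilon>"
  have "closed L" using L(1) closed_closedin subtopology_UNIV by metis
  have "compact (UNIV \<inter> L)" by (rule compact_Int_closed[OF cpt \<open>closed L\<close>])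
  hence cL: "compact L" by simp
  from compact_attains_inf[OF cL L(2)] obtain p where p: "p \<in> L" "\<forall>y\<in>L. p \<le> y" by (elim bexE)
  obtain n0 :: nat where n0: "n0 > 0" "inverse (real n0) < \<epsilon>" using ex_inverse_of_nat_less[OF ep] by blast
  define n where "n = n0 - 1"
  have "real n0 = real (Suc n)" using n0(1) by (simp add: n_def)
  hence small: "1 / real (Suc n) < \<epsilon>" using n0(2) by (simp add: inverse_eq_divide)
  have pw: "p < w" if "u \<in> L" "v \<in> L" "min u v < w" for u v w
  proof -
    have "p \<le> min u v" using p(2) that(1,2) by simp
    thus "p < w" using that(3) by (rule le_less_trans)
  qed
  have "\<exists>U. openin (top_of_set L) U \<and> U \<noteq> {} \<and>
        (\<forall>u\<in>U. \<forall>v\<in>U. \<forall>w. min u v < w \<and> w \<le> max u v \<longrightarrow> w \<notin> T n)"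
  proof (cases "\<exists>s\<in>T n. p < s")
    case True
    let ?A = "{s\<in>T n. p < s}"
    have "?A \<subseteq> T n" "?A \<noteq> {}" using True by auto
    note sub = this
    have W: "\<forall>A. A \<subseteq> T n \<longrightarrow> A \<noteq> {} \<longrightarrow> (\<exists>a\<in>A. \<forall>b\<in>A. a \<le> b)"
      using wo[of n] by (simp only: well_ordered_set_def)
    hence "?A \<subseteq> T n \<longrightarrow> ?A \<noteq> {} \<longrightarrow> (\<exists>a\<in>?A. \<forall>b\<in>?A. a \<le> b)" by (rule spec)
    hence "\<exists>a\<in>?A. \<forall>b\<in>?A. a \<le> b" using sub by simp
    then obtain s0 where s0: "s0 \<in> ?A" "\<forall>b\<in>?A. s0 \<le> b" by (elim bexE)
    have o: "openin (top_of_set L) (L \<inter> {..<s0})" by (rule openin_open_Int) simp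
    have ne: "L \<inter> {..<s0} \<noteq> {}" using p s0 by auto
    have c: "\<forall>u\<in>L \<inter> {..<s0}. \<forall>v\<in>L \<inter> {..<s0}. \<forall>w. min u v < w \<and> w \<le> max u v \<longrightarrow> w \<notin> T n"
    proof (intro ballI allI impI)
      fix u v w assume uv: "u \<in> L \<inter> {..<s0}" "v \<in> L \<inter> {..<s0}" "min u v < w \<and> w \<le> max u v"
      have pw': "p < w" using pw[of u v w] uv by blast
      have "max u v < s0" using uv(1,2) by simp
      hence ws: "w < s0" using uv(3) by (meson le_less_trans)
      show "w \<notin> T n"
      proof
        assume "w \<in> T n"
        hence "w \<in> ?A" using pw' by simp
        hence "s0 \<le> w" using s0(2) by blast
        thus False using ws by simp
      qed
    qed
    show ?thesis using o ne c by blast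
  next
    case False
    have c: "\<forall>u\<in>L. \<forall>v\<in>L. \<forall>w. min u v < w \<and> w \<le> max u v \<longrightarrow> w \<notin> T n"
    proof (intro ballI allI impI)
      fix u v w assume uv: "u \<in> L" "v \<in> L" "min u v < w \<and> w \<le> max u v"
      have "p < w" using pw[of u v w] uv by blast
      thus "w \<notin> T n" using False by blast
    qed
    have o: "openin (top_of_set L) L" by simp
    show ?thesis using o L(2) c by blast
  qed
  then obtain U where U: "openin (top_of_set L) U" "U \<noteq> {}"
     "\<forall>u\<in>U. \<forall>v\<in>U. \<forall>w. min u v < w \<and> w \<le> max u v \<longrightarrow> w \<notin> T n" by blast
  have "Sup {chain_metric T x y | x y. x \<in> U \<and> y \<in> U} \<le> 1 / real (Suc n)"
    by (rule sup_small[OF mono ex U(2) U(3)])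
  hence "Sup {chain_metric T x y | x y. x \<in> U \<and> y \<in> U} < \<epsilon>" using small by linarith
  thus "\<exists>U. openin (top_of_set L) U \<and> U \<noteq> {} \<and> Sup {chain_metric T x y |x y. x \<in> U \<and> y \<in> U} < \<epsilon>"
    using U(1,2) by blast
qed

theorem mainTheorem10:
  fixes T :: "nat \<Rightarrow> 'a::linorder_topology set"
  assumes mono: "\<And>n. T n \<subseteq> T (Suc n)"
    and wo: "\<And>n. well_ordered_set (T n)"
    and minmax: "\<exists>m M. \<forall>n. m \<in> T n \<and> M \<in> T n \<and> (\<forall>x\<in>T n. m \<le> x \<and> x \<le> M)"
    and compl: "is_completion_of (\<Union>n. T n)"
  shows "(\<forall>x y::'a. x < y \<longrightarrow> (\<exists>n. {x<..y} \<inter> T n \<noteq> {}))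
    \<and> (\<forall>x y. chain_metric T x y \<ge> 0)
    \<and> (\<forall>x y. chain_metric T x y = 0 \<longleftrightarrow> x = y)
    \<and> (\<forall>x y. chain_metric T x y = chain_metric T y x)
    \<and> (\<forall>x y z. chain_metric T x z \<le> chain_metric T x y + chain_metric T y z)
    \<and> (\<forall>x y. x \<noteq> y \<longrightarrow> (\<exists>U V. open U \<and> x \<in> U \<and> open V \<and> y \<in> V \<and>
          Inf {chain_metric T u v | u v. u \<in> U \<and> v \<in> V} > 0))
    \<and> fragments (chain_metric T) (UNIV :: 'a set)"
proof -
  have ex: "\<forall>x y::'a. x < y \<longrightarrow> (\<exists>n. {x<..y} \<inter> T n \<noteq> {})"
    using compl unfolding is_completion_of_def by blast
  have cpt: "compact (UNIV :: 'a set)" using compl unfolding is_completion_of_def by blast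
  have z: "\<forall>x y. chain_metric T x y = 0 \<longleftrightarrow> x = y" by (simp add: chain_metric_def)
  have p: "\<forall>x y. chain_metric T x y \<ge> 0" by (simp add: chain_metric_def)
  show ?thesis
  proof (intro conjI)
    show "\<forall>x y. x \<noteq> y \<longrightarrow> (\<exists>U V. open U \<and> x \<in> U \<and> open V \<and> y \<in> V \<and>
          Inf {chain_metric T u v | u v. u \<in> U \<and> v \<in> V} > 0)"
      by (intro allI impI) (rule rez[OF compl])
    show "\<forall>x y z. chain_metric T x z \<le> chain_metric T x y + chain_metric T y z"
      by (intro allI) (rule cm_tri[OF ex])
    show "\<forall>x y. chain_metric T x y = chain_metric T y x"
      by (intro allI) (rule cm_sym)
    show "fragments (chain_metric T) (UNIV :: 'a set)" by (rule frag[OF mono wo ex cpt])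
  qed (rule ex z p)+
qed

end
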